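(* Let $\lambda \vdash 2$ and $\hat{\lambda} \vdash 3$ be partitions such that the pair $(\lambda,\hat{\lambda})$ is not one of $((2),(3))$, $((2),(2\,1))$, $((1^2),(2\,1))$. Let $\mathfrak{r} \subset \mathbb{K}[\mathcal{S}_2]$ be a minimal right ideal of class $\lambda$ and $\hat{\mathfrak{r}} \subset \mathbb{K}[\mathcal{S}_3]$ a minimal right ideal of class $\hat{\lambda}$. Then for all $T \in \mathcal{T}_{\mathfrak{r}} \subseteq \mathcal{T}_2 V$ and all $\hat{T} \in \mathcal{T}_{\hat{\mathfrak{r}}} \subseteq \mathcal{T}_3 V$ we have $$y_{t'}^{\ast}(T\otimes \hat{T}) = 0 \quad\text{and}\quad y_{t'}^{\ast}(\hat{T}\otimes T) = 0 .$$ Consequently, nonzero algebraic covariant derivative curvature tensors of the form $y_{t'}^{\ast}(T\otimes\hat T)$ or $y_{t'}^{\ast}(\hat T\otimes T)$ with $T,\hat T$ in symmetry classes defined by minimal right ideals can only arise when the classes of these ideals are given by one of the three pairs $((2),(3))$, $((2),(2\,1))$, $((1^2),(2\,1))$.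
   Context: $\mathbb{K}=\mathbb{R}$ or $\mathbb{C}$; $V$ is a finite-dimensional $\mathbb{K}$-vector space and $\mathcal{T}_r V$ the space of $r$-times covariant tensors (multilinear maps $V^r\to\mathbb{K}$). For $T\in\mathcal{T}_2V$, $\hat T\in\mathcal{T}_3V$, $(T\otimes\hat T)(v_1,\dots,v_5)=T(v_1,v_2)\hat T(v_3,v_4,v_5)$ and $(\hat T\otimes T)(v_1,\dots,v_5)=\hat T(v_1,v_2,v_3)T(v_4,v_5)$. Permutations multiply by $(p\circ q)(i)=p(q(i))$. An element $a=\sum_{p\in\mathcal{S}_r}a(p)\,p$ of the group ring $\mathbb{K}[\mathcal{S}_r]$ acts on $T\in\mathcal{T}_rV$ by $(aT)(v_1,\dots,v_r)=\sum_p a(p)\,T(v_{p(1)},\dots,v_{p(r)})$, and $a^{\ast}:=\sum_p a(p)\,p^{-1}$. For a right ideal $\mathfrak{r}\subseteq\mathbb{K}[\mathcal{S}_r]$, the symmetry class is $\mathcal{T}_{\mathfrak{r}}=\{aT : a\in\mathfrak{r},\ T\in\mathcal{T}_rV\}$; if $e$ is a generating idempotent of $\mathfrak{r}$ then $\mathcal{T}_{\mathfrak r}=\{T: eT=T\}$. For a Young tableau $t$ with entries $1,\dots,r$, the Young symmetrizer is $y_t=\sum_{p\in\mathcal{H}_t}\sum_{q\in\mathcal{V}_t}\mathrm{sign}(q)\,p\circ q$, where $\mathcal{H}_t$ ($\mathcal{V}_t$) is the group of permutations preserving each row (column) of $t$. A minimal right ideal of $\mathbb{K}[\mathcal{S}_n]$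 is said to be of class $\lambda\vdash n$ if it is isomorphic (as right $\mathbb{K}[\mathcal{S}_n]$-module) to $y_t\,\mathbb{K}[\mathcal{S}_n]$ for a Young tableau $t$ of shape $\lambda$, equivalently if it lies in the minimal two-sided ideal of $\mathbb{K}[\mathcal{S}_n]$ corresponding to $\lambda$. Here $t'$ is the Young tableau with rows $(1,3,5)$ and $(2,4)$ (so columns $\{1,2\},\{3,4\},\{5\}$). An algebraic covariant derivative curvature tensor is a tensor $\mathfrak{R}'\in\mathcal{T}_5V$ with, for all $u,w,x,y,z\in V$: $\mathfrak R'(w,x,y,z,u)=-\mathfrak R'(w,x,z,y,u)=\mathfrak R'(y,z,w,x,u)$, $\mathfrak R'(w,x,y,z,u)+\mathfrak R'(w,y,z,x,u)+\mathfrak R'(w,z,x,y,u)=0$, and $\mathfrak R'(w,x,y,z,u)+\mathfrak R'(w,x,z,u,y)+\mathfrak R'(w,x,u,y,z)=0$. *)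

theory Defs
  imports Complex_Main "HOL-Combinatorics.Permutations" "HOL-Library.Function_Algebras"
begin

text \<open>Permutations of {1..r} (as maps nat => nat fixing everything outside {1..r}).
  Elements of the group ring K[S_r] are coefficient functions a with a p = 0 for
  p not in S_r; a = sum_p a(p) p.\<close>

type_synonym 'k grpring = "(nat \<Rightarrow> nat) \<Rightarrow> 'k"

definition perms :: "nat \<Rightarrow> (nat \<Rightarrow> nat) set" where
  "perms r = {p. p permutes {1..r}}"

definition group_ring :: "nat \<Rightarrow> ('k::zero) grpring set" where
  "group_ring r = {a. \<forall>p. p \<notin> perms r \<longrightarrow> a p = 0}"

definition gr_mult :: "nat \<Rightarrow> ('k::comm_ring_1) grpring \<Rightarrow> 'k grpring \<Rightarrow> 'k grpring" where
  "gr_mult r a b = (\<lambda>s. \<Sum>(p,q)\<in>{(p,q). p \<in> perms r \<and> q \<in> perms r \<and> p \<circ> q = s}. a p * b q)"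

definition star :: "nat \<Rightarrow> ('k::zero) grpring \<Rightarrow> 'k grpring" where
  "star r a = (\<lambda>s. if s \<in> perms r then a (inv s) else 0)"

definition right_ideal :: "nat \<Rightarrow> ('k::comm_ring_1) grpring set \<Rightarrow> bool" where
  "right_ideal r I \<longleftrightarrow> I \<subseteq> group_ring r \<and> 0 \<in> I \<and> (\<forall>x\<in>I. \<forall>y\<in>I. x + y \<in> I)
     \<and> (\<forall>x\<in>I. \<forall>b\<in>group_ring r. gr_mult r x b \<in> I)"

definition minimal_right_ideal :: "nat \<Rightarrow> ('k::comm_ring_1) grpring set \<Rightarrow> bool" where
  "minimal_right_ideal r I \<longleftrightarrow> right_ideal r I \<and> I \<noteq> {0}
     \<and> (\<forall>J. right_ideal r J \<and> J \<subseteq> I \<longrightarrow> J = {0} \<or> J = I)"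

text \<open>Isomorphism of right K[S_r]-modules (K-linearity follows from compatibility
  with right multiplication by the scalars c * id).\<close>
definition right_module_iso :: "nat \<Rightarrow> ('k::comm_ring_1) grpring set \<Rightarrow> 'k grpring set \<Rightarrow> bool" where
  "right_module_iso r I J \<longleftrightarrow> (\<exists>f. bij_betw f I J \<and> (\<forall>x\<in>I. \<forall>y\<in>I. f (x + y) = f x + f y)
     \<and> (\<forall>x\<in>I. \<forall>b\<in>group_ring r. f (gr_mult r x b) = gr_mult r (f x) b))"

definition partition_of :: "nat \<Rightarrow> nat list \<Rightarrow> bool" where
  "partition_of n lam \<longleftrightarrow> sum_list lam = n \<and> 0 \<notin> set lam \<and> sorted_wrt (\<ge>) lam"

text \<open>A Young tableau is given by its list of rows; it has shape lam and entries 1..n.\<close>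
definition tableau_of_shape :: "nat \<Rightarrow> nat list \<Rightarrow> nat list list \<Rightarrow> bool" where
  "tableau_of_shape n lam t \<longleftrightarrow> partition_of n lam \<and> map length t = lam
     \<and> distinct (concat t) \<and> set (concat t) = {1..n}"

definition tab_col :: "nat list list \<Rightarrow> nat \<Rightarrow> nat set" where
  "tab_col t j = {t ! i ! j | i. i < length t \<and> j < length (t ! i)}"

definition row_group :: "nat list list \<Rightarrow> (nat \<Rightarrow> nat) set" where
  "row_group t = {p \<in> perms (length (concat t)). \<forall>i < length t. p ` set (t ! i) = set (t ! i)}"

definition col_group :: "nat list list \<Rightarrow> (nat \<Rightarrow> nat) set" where
  "col_group t = {q \<in> perms (length (concat t)). \<forall>j. q ` tab_col t j = tab_col t j}"

definition young_sym :: "nat list list \<Rightarrow> ('k::comm_ring_1) grpring" where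
  "young_sym t = (\<lambda>s. \<Sum>(p,q)\<in>{(p,q). p \<in> row_group t \<and> q \<in> col_group t \<and> p \<circ> q = s}.
       of_int (sign q))"

definition of_class :: "nat \<Rightarrow> nat list \<Rightarrow> ('k::comm_ring_1) grpring set \<Rightarrow> bool" where
  "of_class n lam I \<longleftrightarrow> (\<exists>t. tableau_of_shape n lam t \<and>
      right_module_iso n I {gr_mult n (young_sym t) b | b. b \<in> group_ring n})"

definition t' :: "nat list list" where
  "t' = [[1,3,5],[2,4]]"

text \<open>V is the coordinate space 'n => 'k ('n finite).\<close>

definition tensors :: "nat \<Rightarrow> ((nat \<Rightarrow> 'n::finite \<Rightarrow> 'k::comm_ring_1) \<Rightarrow> 'k) set" where
  "tensors r = {T. (\<forall>v w. (\<forall>i\<in>{1..r}. v i = w i) \<longrightarrow> T v = T w)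
     \<and> (\<forall>i\<in>{1..r}. \<forall>v x y. T (v(i := x + y)) = T (v(i := x)) + T (v(i := y)))
     \<and> (\<forall>i\<in>{1..r}. \<forall>v x c. T (v(i := (\<lambda>j. c * x j))) = c * T (v(i := x)))}"

definition act :: "nat \<Rightarrow> ('k::comm_ring_1) grpring \<Rightarrow> ((nat \<Rightarrow> 'v) \<Rightarrow> 'k) \<Rightarrow> ((nat \<Rightarrow> 'v) \<Rightarrow> 'k)" where
  "act r a T = (\<lambda>v. \<Sum>p\<in>perms r. a p * T (v \<circ> p))"

definition symclass :: "nat \<Rightarrow> ('k::comm_ring_1) grpring set \<Rightarrow> ((nat \<Rightarrow> 'n::finite \<Rightarrow> 'k) \<Rightarrow> 'k) set" where
  "symclass r I = {act r a T | a T. a \<in> I \<and> T \<in> tensors r}"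

definition tprod23 :: "((nat \<Rightarrow> 'v) \<Rightarrow> 'k::times) \<Rightarrow> ((nat \<Rightarrow> 'v) \<Rightarrow> 'k) \<Rightarrow> ((nat \<Rightarrow> 'v) \<Rightarrow> 'k)" where
  "tprod23 T Th = (\<lambda>v. T v * Th (\<lambda>j. v (j + 2)))"

definition tprod32 :: "((nat \<Rightarrow> 'v) \<Rightarrow> 'k::times) \<Rightarrow> ((nat \<Rightarrow> 'v) \<Rightarrow> 'k) \<Rightarrow> ((nat \<Rightarrow> 'v) \<Rightarrow> 'k)" where
  "tprod32 Th T = (\<lambda>v. Th v * T (\<lambda>j. v (j + 3)))"

end

theory Submission
  imports Defs
begin


lemma perms_finite[simp]: "finite (perms n)"
  unfolding perms_def by (rule finite_permutations) simp

lemma perms_comp: "p \<in> perms n \<Longrightarrow> q \<in> perms n \<Longrightarrow> p \<circ> q \<in> perms n"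
  unfolding perms_def by (simp add: permutes_compose)

lemma perms_inv: "p \<in> perms n \<Longrightarrow> inv p \<in> perms n"
  unfolding perms_def by (simp add: permutes_inv)

lemma perms_id[simp]: "id \<in> perms n"
  unfolding perms_def by (simp add: permutes_id)

lemma perms_inv_comp: "p \<in> perms n \<Longrightarrow> p \<circ> inv p = id" "p \<in> perms n \<Longrightarrow> inv p \<circ> p = id"
  unfolding perms_def by (simp_all add: permutes_inv_o)

lemma perms_inv_inv: "p \<in> perms n \<Longrightarrow> inv (inv p) = p"
  unfolding perms_def by (simp add: permutes_inv_inv)

lemma pair_set:
  assumes "u \<in> perms n"
  shows "{(p,q). p \<in> perms n \<and> q \<in> perms n \<and> p \<circ> q = u} = (\<lambda>q. (u \<circ> inv q, q)) ` perms n"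
proof (rule set_eqI, rule iffI)
  fix x assume "x \<in> {(p,q). p \<in> perms n \<and> q \<in> perms n \<and> p \<circ> q = u}"
  then obtain p q where x: "x = (p,q)" "p \<in> perms n" "q \<in> perms n" "p \<circ> q = u" by auto
  have "u \<circ> inv q = p \<circ> (q \<circ> inv q)" using x by (simp add: o_assoc)
  also have "\<dots> = p" using perms_inv_comp(1)[OF x(3)] by simp
  finally show "x \<in> (\<lambda>q. (u \<circ> inv q, q)) ` perms n" using x by auto
next
  fix x assume "x \<in> (\<lambda>q. (u \<circ> inv q, q)) ` perms n"
  then obtain q where x: "x = (u \<circ> inv q, q)" "q \<in> perms n" by auto
  have "u \<circ> inv q \<circ> q = u" using perms_inv_comp(2)[OF x(2)] by (simp add: comp_assoc)
  then show "x \<in> {(p,q). p \<in> perms n \<and> q \<in> perms n \<and> p \<circ> q = u}"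
    using x assms by (auto intro: perms_comp perms_inv)
qed

lemma pair_set_empty:
  assumes "u \<notin> perms n"
  shows "{(p,q). p \<in> perms n \<and> q \<in> perms n \<and> p \<circ> q = u} = {}"
  using assms perms_comp by blast

lemma pair_sum:
  assumes "u \<in> perms n"
  shows "(\<Sum>(p,q)\<in>{(p,q). p \<in> perms n \<and> q \<in> perms n \<and> p \<circ> q = u}. g p q) = (\<Sum>q\<in>perms n. g (u \<circ> inv q) q)"
proof -
  have inj: "inj_on (\<lambda>q. (u \<circ> inv q, q)) (perms n)" by (rule inj_onI) auto
  show ?thesis unfolding pair_set[OF assms] sum.reindex[OF inj] by simp
qed

definition perm_ind :: "(nat \<Rightarrow> nat) \<Rightarrow> ('k::comm_ring_1) grpring" where
  "perm_ind s = (\<lambda>p. if p = s then 1 else 0)"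

lemma perm_ind_in: "s \<in> perms n \<Longrightarrow> perm_ind s \<in> group_ring n"
  unfolding perm_ind_def group_ring_def by auto

lemma mult_delta:
  assumes z: "z \<in> group_ring n" and s: "s \<in> perms n"
  shows "gr_mult n z (perm_ind s) = (\<lambda>u. z (u \<circ> inv s))"
proof
  fix u
  show "gr_mult n z (perm_ind s) u = z (u \<circ> inv s)"
  proof (cases "u \<in> perms n")
    case True
    then show ?thesis unfolding gr_mult_def pair_sum[OF True]
      using s by (simp add: perm_ind_def if_distrib cong: if_cong)
  next
    case False
    have "u \<circ> inv s \<notin> perms n"
    proof
      assume "u \<circ> inv s \<in> perms n"
      then have "u \<circ> inv s \<circ> s \<in> perms n" using s perms_comp by blast
      then show False using False perms_inv_comp(2)[OF s] by (simp add: comp_assoc)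
    qed
    then show ?thesis using z False unfolding gr_mult_def group_ring_def pair_set_empty[OF False] by simp
  qed
qed

definition good_char :: "nat \<Rightarrow> ((nat \<Rightarrow> nat) \<Rightarrow> 'k::comm_ring_1) \<Rightarrow> bool" where
  "good_char n \<chi> \<longleftrightarrow> \<chi> id = 1 \<and> (\<forall>p\<in>perms n. \<forall>q\<in>perms n. \<chi> (p \<circ> q) = \<chi> p * \<chi> q)
     \<and> (\<forall>p\<in>perms n. \<chi> (inv p) = \<chi> p) \<and> (\<forall>p\<in>perms n. \<chi> p = 1 \<or> \<chi> p = -1)"

definition ychar :: "nat \<Rightarrow> ((nat \<Rightarrow> nat) \<Rightarrow> 'k::comm_ring_1) \<Rightarrow> 'k grpring" where
  "ychar n \<chi> = (\<lambda>s. if s \<in> perms n then \<chi> s else 0)"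

lemma J_form:
  assumes g: "good_char n \<chi>" and b: "b \<in> group_ring n"
  shows "gr_mult n (ychar n \<chi>) b = (\<lambda>u. if u \<in> perms n then \<chi> u * (\<Sum>q\<in>perms n. \<chi> q * b q) else 0)"
proof
  fix u
  show "gr_mult n (ychar n \<chi>) b u = (if u \<in> perms n then \<chi> u * (\<Sum>q\<in>perms n. \<chi> q * b q) else 0)"
  proof (cases "u \<in> perms n")
    case True
    have "gr_mult n (ychar n \<chi>) b u = (\<Sum>q\<in>perms n. ychar n \<chi> (u \<circ> inv q) * b q)"
      unfolding gr_mult_def pair_sum[OF True] by simp
    also have "\<dots> = (\<Sum>q\<in>perms n. \<chi> u * (\<chi> q * b q))"
    proof (rule sum.cong)
      fix q assume q: "q \<in> perms n"
      then have "u \<circ> inv q \<in> perms n" using True perms_comp perms_inv by blast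
      then show "ychar n \<chi> (u \<circ> inv q) * b q = \<chi> u * (\<chi> q * b q)"
        using g q True perms_inv[OF q] unfolding ychar_def good_char_def by (simp add: mult.assoc)
    qed simp
    finally show ?thesis using True by (simp add: sum_distrib_left)
  next
    case False
    then show ?thesis unfolding gr_mult_def pair_set_empty[OF False] by simp
  qed
qed




lemma good_char_props:
  assumes "good_char n \<chi>" "p \<in> perms n" "q \<in> perms n"
  shows "\<chi> (p \<circ> q) = \<chi> p * \<chi> q" "\<chi> (inv p) = \<chi> p" "\<chi> p * \<chi> p = 1" "\<chi> id = 1"
proof -
  show 1: "\<chi> (p \<circ> q) = \<chi> p * \<chi> q" "\<chi> (inv p) = \<chi> p" "\<chi> id = 1"
    using assms unfolding good_char_def by auto
  have "\<chi> p = 1 \<or> \<chi> p = -1" using assms unfolding good_char_def by auto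
  then show "\<chi> p * \<chi> p = 1" by auto
qed

lemma J_shift:
  assumes g: "good_char n \<chi>" and z: "z \<in> {gr_mult n (ychar n \<chi>) b | b. b \<in> group_ring n}"
    and s: "s \<in> perms n"
  shows "z \<in> group_ring n" "(\<lambda>u. z (u \<circ> inv s)) = (\<lambda>u. \<chi> s * z u)"
proof -
  obtain b where b: "b \<in> group_ring n" "z = gr_mult n (ychar n \<chi>) b" using z by auto
  define c where "c = (\<Sum>q\<in>perms n. \<chi> q * b q)"
  have zf: "z = (\<lambda>u. if u \<in> perms n then \<chi> u * c else 0)"
    unfolding c_def using J_form[OF g b(1)] b(2) by simp
  show "z \<in> group_ring n" unfolding zf group_ring_def by auto
  show "(\<lambda>u. z (u \<circ> inv s)) = (\<lambda>u. \<chi> s * z u)"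
  proof
    fix u
    show "z (u \<circ> inv s) = \<chi> s * z u"
    proof (cases "u \<in> perms n")
      case True
      have "u \<circ> inv s \<in> perms n" using True s perms_comp perms_inv by blast
      then show ?thesis unfolding zf using True s perms_inv[OF s] good_char_props[OF g True perms_inv[OF s]]
          good_char_props[OF g s s] by (simp add: mult_ac)
    next
      case False
      have "u \<circ> inv s \<notin> perms n"
      proof
        assume "u \<circ> inv s \<in> perms n"
        then have "u \<circ> inv s \<circ> s \<in> perms n" using s perms_comp by blast
        then show False using False perms_inv_comp(2)[OF s] by (simp add: comp_assoc)
      qed
      then show ?thesis unfolding zf using False by simp
    qed
  qed
qed

lemma R_form:
  assumes ri: "right_ideal n R" and g: "good_char n \<chi>"
    and iso: "right_module_iso n R {gr_mult n (ychar n \<chi>) b | b. b \<in> group_ring n}"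
    and x: "x \<in> R"
  shows "\<forall>u\<in>perms n. x u = \<chi> u * x id"
proof -
  let ?J = "{gr_mult n (ychar n \<chi>) b | b. b \<in> group_ring n}"
  obtain f where f: "bij_betw f R ?J" "\<forall>x\<in>R. \<forall>y\<in>R. f (x + y) = f x + f y"
    "\<forall>x\<in>R. \<forall>b\<in>group_ring n. f (gr_mult n x b) = gr_mult n (f x) b"
    using iso unfolding right_module_iso_def by blast
  have R: "R \<subseteq> group_ring n" "0 \<in> R" "\<forall>x\<in>R. \<forall>y\<in>R. x + y \<in> R"
    "\<forall>x\<in>R. \<forall>b\<in>group_ring n. gr_mult n x b \<in> R"
    using ri unfolding right_ideal_def by auto
  have injf: "inj_on f R" using f(1) bij_betw_def by blast
  have f0: "f 0 = 0"
  proof -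
    have "f (0 + 0) = f 0 + f 0" by (rule f(2)[rule_format, OF R(2) R(2)])
    then show ?thesis by simp
  qed
  have key: "gr_mult n x (perm_ind s) = (\<lambda>u. \<chi> s * x u)" if s: "s \<in> perms n" for s
  proof -
    let ?xs = "gr_mult n x (perm_ind s)"
    have xs: "?xs \<in> R" by (rule R(4)[rule_format, OF x perm_ind_in[OF s]])
    have fx: "f x \<in> ?J" by (rule bij_betw_apply[OF f(1) x])
    have "f ?xs = gr_mult n (f x) (perm_ind s)" by (rule f(3)[rule_format, OF x perm_ind_in[OF s]])
    also have "\<dots> = (\<lambda>u. f x (u \<circ> inv s))" using mult_delta[OF J_shift(1)[OF g fx s] s] .
    also have "\<dots> = (\<lambda>u. \<chi> s * f x u)" using J_shift(2)[OF g fx s] .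
    finally have fxs: "f ?xs = (\<lambda>u. \<chi> s * f x u)" .
    have "\<chi> s = 1 \<or> \<chi> s = -1" using g s unfolding good_char_def by auto
    then show ?thesis
    proof
      assume c: "\<chi> s = 1"
      then have "f ?xs = f x" using fxs by simp
      then have "?xs = x" using injf xs x inj_on_def by metis
      then show ?thesis using c by simp
    next
      assume c: "\<chi> s = -1"
      have "f (?xs + x) = f ?xs + f x" by (rule f(2)[rule_format, OF xs x])
      also have "\<dots> = 0" using fxs c by (simp add: fun_eq_iff)
      finally have "f (?xs + x) = f 0" using f0 by simp
      moreover have "?xs + x \<in> R" by (rule R(3)[rule_format, OF xs x])
      ultimately have "?xs + x = 0" using injf R(2) inj_on_def by metis
      then have "?xs = - x" by (metis eq_neg_iff_add_eq_0)
      then show ?thesis using c by (simp add: fun_eq_iff)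
    qed
  qed
  show ?thesis
  proof
    fix w assume w: "w \<in> perms n"
    have iw: "inv w \<in> perms n" using perms_inv[OF w] .
    have "gr_mult n x (perm_ind (inv w)) = (\<lambda>u. x (u \<circ> inv (inv w)))"
      by (rule mult_delta[OF subsetD[OF R(1) x] iw])
    then have "x (id \<circ> inv (inv w)) = \<chi> (inv w) * x id" using key[OF iw] fun_cong[of _ _ id] by (metis (no_types))
    then show "x w = \<chi> w * x id" using perms_inv_inv[OF w] good_char_props(2)[OF g w w] by simp
  qed
qed




lemma perms_fix_id: assumes "q \<in> perms n" "\<forall>x\<in>{1..n}. q x = x" shows "q = id"
proof
  fix x show "q x = id x"
    using assms permutes_not_in[of q "{1..n}" x] unfolding perms_def by (cases "x \<in> {1..n}") auto
qed

lemma young_row: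
  assumes "tableau_of_shape n [n] t"
  shows "young_sym t = (ychar n (\<lambda>_. 1) :: ('k::comm_ring_1) grpring)"
proof -
  have ml: "map length t = [n]" and d: "set (concat t) = {1..n}"
    using assms unfolding tableau_of_shape_def by auto
  then obtain l where t: "t = [l]" and ll: "length l = n"
    by (cases t) auto
  have sl: "set l = {1..n}" using d t by simp
  have lc: "length (concat t) = n" using t ll by simp
  have rg: "row_group t = perms n"
  proof -
    have "\<forall>i<length t. p ` set (t ! i) = set (t ! i)" if "p \<in> perms n" for p
      using that sl unfolding t perms_def by (simp add: permutes_image)
    then show ?thesis unfolding row_group_def lc by blast
  qed
  have tc: "tab_col t j = (if j < n then {l ! j} else {})" for j
    unfolding tab_col_def t using ll by auto
  have cg: "col_group t = {id}"
  proof
    show "col_group t \<subseteq> {id}"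
    proof
      fix q assume q: "q \<in> col_group t"
      then have qp: "q \<in> perms n" and qi: "\<forall>j. q ` tab_col t j = tab_col t j"
        unfolding col_group_def lc by auto
      have "\<forall>x\<in>{1..n}. q x = x"
      proof
        fix x assume "x \<in> {1..n}"
        then obtain j where j: "j < n" "x = l ! j" using sl ll by (metis in_set_conv_nth)
        have "q ` {l ! j} = {l ! j}" using qi[rule_format, of j] tc[of j] j by simp
        then show "q x = x" using j by simp
      qed
      then show "q \<in> {id}" using perms_fix_id[OF qp] by simp
    qed
  next
    show "{id} \<subseteq> col_group t" unfolding col_group_def lc by auto
  qed
  show ?thesis
  proof
    fix s
    have "{(p, q). p \<in> row_group t \<and> q \<in> col_group t \<and> p \<circ> q = s} = (if s \<in> perms n then {(s, id)} else {})"
      unfolding rg cg by auto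
    then show "young_sym t s = ychar n (\<lambda>_. 1) s"
      unfolding young_sym_def ychar_def by simp
  qed
qed



lemma concat_singles: "\<forall>r\<in>set t. length r = 1 \<Longrightarrow> concat t = map (\<lambda>r. r ! 0) t"
  by (induction t) (auto simp: length_Suc_conv)

lemma young_col:
  assumes "tableau_of_shape n (replicate n 1) t"
  shows "young_sym t = (ychar n (\<lambda>p. of_int (sign p)) :: ('k::comm_ring_1) grpring)"
proof -
  have ml: "map length t = replicate n 1" and d: "set (concat t) = {1..n}"
    using assms unfolding tableau_of_shape_def by auto
  have lt: "length t = n" using ml by (metis length_map length_replicate)
  have r1: "\<forall>r\<in>set t. length r = 1" using ml by (metis in_set_replicate image_eqI list.set_map)
  have r1': "i < n \<Longrightarrow> length (t ! i) = 1" for i using r1 lt by auto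
  have ct: "concat t = map (\<lambda>r. r ! 0) t" using concat_singles[OF r1] .
  have lc: "length (concat t) = n" using ct lt by simp
  have st: "{1..n} = {t ! i ! 0 | i. i < n}"
  proof -
    have "{1..n} = set (map (\<lambda>r. r ! 0) t)" using d ct by simp
    also have "\<dots> = {t ! i ! 0 | i. i < n}" using lt
      apply (auto simp: in_set_conv_nth image_iff) using nth_mem by blast
    finally show ?thesis .
  qed
  have rg: "row_group t = {id}"
  proof
    show "row_group t \<subseteq> {id}"
    proof
      fix p assume p: "p \<in> row_group t"
      then have pp: "p \<in> perms n" and pi: "\<forall>i<n. p ` set (t ! i) = set (t ! i)"
        unfolding row_group_def lc lt by auto
      have "\<forall>x\<in>{1..n}. p x = x"
      proof
        fix x assume "x \<in> {1..n}"
        then have "x \<in> {t ! i ! 0 | i. i < n}" by (subst st[symmetric])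
        then obtain i where i: "i < n" "x = t ! i ! 0" by blast
        obtain a where "t ! i = [a]" using r1'[OF i(1)] by (auto simp: length_Suc_conv)
        then have "set (t ! i) = {t ! i ! 0}" by simp
        then show "p x = x" using pi[rule_format, OF i(1)] i by simp
      qed
      then show "p \<in> {id}" using perms_fix_id[OF pp] by simp
    qed
  next
    show "{id} \<subseteq> row_group t" unfolding row_group_def lc by auto
  qed
  have tc: "tab_col t j = (if j = 0 then {1..n} else {})" for j
  proof (cases "j = 0")
    case True
    have "tab_col t j = {t ! i ! 0 | i. i < n}" unfolding tab_col_def True using r1' lt
      by auto (metis length_greater_0_conv zero_less_Suc)
    then have "tab_col t j = {1..n}" by (rule trans[OF _ st[symmetric]])
    then show ?thesis using True by simp
  next
    case False
    then show ?thesis unfolding tab_col_def using r1' lt by auto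
  qed
  have cg: "col_group t = perms n"
  proof -
    have "q ` tab_col t j = tab_col t j" if "q \<in> perms n" for q j
      using that unfolding tc perms_def by (simp add: permutes_image)
    then show ?thesis unfolding col_group_def lc by blast
  qed
  show ?thesis
  proof
    fix s
    have "{(p, q). p \<in> row_group t \<and> q \<in> col_group t \<and> p \<circ> q = s} = (if s \<in> perms n then {(id, s)} else {})"
      unfolding rg cg by auto
    then show "young_sym t s = ychar n (\<lambda>p. of_int (sign p)) s"
      unfolding young_sym_def ychar_def by simp
  qed
qed



lemma good_char_one: "good_char n (\<lambda>_. 1)"
  unfolding good_char_def by simp

lemma perms_permutation: "p \<in> perms n \<Longrightarrow> permutation p"
  unfolding perms_def permutation_permutes by auto

lemma sign_h1: "p \<in> perms n \<Longrightarrow> q \<in> perms n \<Longrightarrow> (of_int (sign (p \<circ> q))::'k::comm_ring_1) = of_int (sign p) * of_int (sign q)"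
  by (simp add: sign_compose perms_permutation)
lemma sign_h2: "p \<in> perms n \<Longrightarrow> (of_int (sign (inv p))::'k::comm_ring_1) = of_int (sign p)"
  by (simp add: sign_inverse perms_permutation)
lemma sign_h3: "(of_int (sign p)::'k::comm_ring_1) = 1 \<or> of_int (sign p) = -1"
  unfolding sign_def by (cases "evenperm p") simp_all

lemma good_char_sign: "good_char n (\<lambda>p. of_int (sign p))"
  unfolding good_char_def
  by (intro conjI ballI sign_h1 sign_h2 sign_h3; simp)



lemma perms_cancel:
  assumes t: "t \<in> perms n"
  shows "inv t \<circ> (t \<circ> p) = p" "t \<circ> (inv t \<circ> p) = p"
  using permutes_inverses[of t "{1..n}"] t unfolding perms_def by (auto simp: fun_eq_iff)

lemma perms_reindex:
  assumes t: "\<tau> \<in> perms n"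
  shows "(\<Sum>p\<in>perms n. h (\<tau> \<circ> p)) = (\<Sum>p\<in>perms n. h p)"
proof (rule sum.reindex_bij_witness[where i="\<lambda>p. inv \<tau> \<circ> p" and j="\<lambda>p. \<tau> \<circ> p"])
  fix a assume a: "a \<in> perms n"
  show "inv \<tau> \<circ> (\<tau> \<circ> a) = a" by (rule perms_cancel(1)[OF t])
  show "\<tau> \<circ> a \<in> perms n" using perms_comp[OF t a] .
  show "h (\<tau> \<circ> a) = h (\<tau> \<circ> a)" ..
next
  fix b assume b: "b \<in> perms n"
  show "\<tau> \<circ> (inv \<tau> \<circ> b) = b" by (rule perms_cancel(2)[OF t])
  show "inv \<tau> \<circ> b \<in> perms n" using perms_comp[OF perms_inv[OF t] b] .
qed

lemma act_sym:
  assumes g: "good_char n \<chi>" and xf: "\<forall>u\<in>perms n. x u = \<chi> u * x id"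
    and t: "\<tau> \<in> perms n"
  shows "act n x T0 (v \<circ> \<tau>) = \<chi> \<tau> * act n x T0 v"
proof -
  let ?c = "x id"
  let ?h = "\<lambda>p. \<chi> (inv \<tau> \<circ> p) * ?c * T0 (v \<circ> p)"
  have "act n x T0 (v \<circ> \<tau>) = (\<Sum>p\<in>perms n. ?h (\<tau> \<circ> p))"
    unfolding act_def
  proof (rule sum.cong)
    fix p assume p: "p \<in> perms n"
    have ip: "inv \<tau> \<circ> (\<tau> \<circ> p) = p" by (rule perms_cancel(1)[OF t])
    have "?h (\<tau> \<circ> p) = \<chi> p * ?c * T0 (v \<circ> (\<tau> \<circ> p))" by (simp only: ip)
    moreover have xp: "x p = \<chi> p * ?c" using xf p by blast
    ultimately show "x p * T0 (v \<circ> \<tau> \<circ> p) = ?h (\<tau> \<circ> p)" by (simp add: comp_assoc)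
  qed simp
  also have "\<dots> = (\<Sum>p\<in>perms n. ?h p)" by (rule perms_reindex[OF t])
  also have "\<dots> = (\<Sum>p\<in>perms n. \<chi> \<tau> * (x p * T0 (v \<circ> p)))"
  proof (rule sum.cong)
    fix p assume p: "p \<in> perms n"
    have "\<chi> (inv \<tau> \<circ> p) = \<chi> \<tau> * \<chi> p"
      using good_char_props(1)[OF g perms_inv[OF t] p] good_char_props(2)[OF g t t] by simp
    moreover have xp: "x p = \<chi> p * ?c" using xf p by blast
    ultimately show "?h p = \<chi> \<tau> * (x p * T0 (v \<circ> p))" by (simp add: mult_ac)
  qed simp
  also have "\<dots> = \<chi> \<tau> * act n x T0 v" unfolding act_def by (simp add: sum_distrib_left)
  finally show ?thesis .
qed

lemma act_loc:
  assumes T0: "T0 \<in> tensors n" and vw: "\<forall>i\<in>{1..n}. v i = w i"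
  shows "act n x T0 v = act n x T0 w"
  unfolding act_def
proof (rule sum.cong)
  fix p assume p: "p \<in> perms n"
  have "\<forall>i\<in>{1..n}. (v \<circ> p) i = (w \<circ> p) i"
  proof
    fix i assume i: "i \<in> {1..n}"
    have pp: "p permutes {1..n}" using p unfolding perms_def by simp
    have "p i \<in> {1..n}" using i by (simp only: permutes_in_image[OF pp])
    then show "(v \<circ> p) i = (w \<circ> p) i" using vw by simp
  qed
  then have "T0 (v \<circ> p) = T0 (w \<circ> p)" using T0 unfolding tensors_def by blast
  then show "x p * T0 (v \<circ> p) = x p * T0 (w \<circ> p)" by simp
qed simp




lemma inv_image_stable:
  assumes p: "p \<in> perms n" and X: "p ` X = X"
  shows "inv p ` X = X"
proof -
  have "inv p ` X = inv p ` (p ` X)" using X by simp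
  also have "\<dots> = (inv p \<circ> p) ` X" by (simp add: image_comp)
  also have "\<dots> = X" using perms_inv_comp(2)[OF p] by simp
  finally show ?thesis .
qed

lemma row_group_inv: assumes "p \<in> row_group t" shows "inv p \<in> row_group t"
proof -
  have p: "p \<in> perms (length (concat t))" and h: "\<forall>i<length t. p ` set (t ! i) = set (t ! i)"
    using assms unfolding row_group_def by auto
  have "\<forall>i<length t. inv p ` set (t ! i) = set (t ! i)"
    using h inv_image_stable[OF p] by simp
  then show ?thesis unfolding row_group_def using perms_inv[OF p] by simp
qed

lemma col_group_inv: assumes "q \<in> col_group t" shows "inv q \<in> col_group t"
proof -
  have p: "q \<in> perms (length (concat t))" and h: "\<forall>j. q ` tab_col t j = tab_col t j"
    using assms unfolding col_group_def by auto
  have "\<forall>j. inv q ` tab_col t j = tab_col t j"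
    using h inv_image_stable[OF p] by simp
  then show ?thesis unfolding col_group_def using perms_inv[OF p] by simp
qed

lemma row_group_perms: "row_group t \<subseteq> perms (length (concat t))"
  unfolding row_group_def by blast

lemma col_group_perms: "col_group t \<subseteq> perms (length (concat t))"
  unfolding col_group_def by blast

lemma row_inv_inv: "p \<in> row_group t \<Longrightarrow> inv (inv p) = p"
  using row_group_perms perms_inv_inv by blast

lemma col_inv_inv: "p \<in> col_group t \<Longrightarrow> inv (inv p) = p"
  using col_group_perms perms_inv_inv by blast

lemma act_star_young:
  fixes t :: "nat list list" and P :: "(nat \<Rightarrow> 'v) \<Rightarrow> 'k::comm_ring_1"
  defines "n \<equiv> length (concat t)"
  shows "act n (star n (young_sym t)) P v =
    (\<Sum>x\<in>row_group t \<times> col_group t. of_int (sign (snd x)) * P (v \<circ> inv (fst x \<circ> snd x)))"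
proof -
  let ?H = "row_group t" and ?V = "col_group t"
  have H: "?H \<subseteq> perms n" and V: "?V \<subseteq> perms n"
    unfolding n_def by (rule row_group_perms, rule col_group_perms)
  have fH: "finite ?H" and fV: "finite ?V" using H V finite_subset perms_finite by blast+
  let ?g = "\<lambda>x. inv (fst x \<circ> snd x)"
  let ?h = "\<lambda>x. of_int (sign (snd x)) * P (v \<circ> ?g x) :: 'k"
  have gS: "?g ` (?H \<times> ?V) \<subseteq> perms n"
  proof
    fix y assume "y \<in> ?g ` (?H \<times> ?V)"
    then obtain p q where "p \<in> ?H" "q \<in> ?V" "y = inv (p \<circ> q)" by auto
    then show "y \<in> perms n" using H V perms_comp perms_inv by blast
  qed
  have "(\<Sum>x\<in>?H \<times> ?V. ?h x) = (\<Sum>s\<in>perms n. \<Sum>x\<in>{x. x \<in> ?H \<times> ?V \<and> ?g x = s}. ?h x)"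
    by (rule sum.group[symmetric]) (use fH fV gS in auto)
  also have "\<dots> = (\<Sum>s\<in>perms n. star n (young_sym t) s * P (v \<circ> s))"
  proof (rule sum.cong)
    fix s assume s: "s \<in> perms n"
    have seteq: "{x. x \<in> ?H \<times> ?V \<and> ?g x = s} = {(p,q). p \<in> ?H \<and> q \<in> ?V \<and> p \<circ> q = inv s}"
    proof (rule set_eqI)
      fix x :: "(nat \<Rightarrow> nat) \<times> (nat \<Rightarrow> nat)"
      obtain p q where x: "x = (p,q)" by (cases x)
      have "p \<in> ?H \<Longrightarrow> q \<in> ?V \<Longrightarrow> (inv (p \<circ> q) = s) = (p \<circ> q = inv s)"
      proof -
        assume "p \<in> ?H" "q \<in> ?V"
        then have pq: "p \<circ> q \<in> perms n" using H V perms_comp by blast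
        show ?thesis using perms_inv_inv[OF pq] perms_inv_inv[OF s] by metis
      qed
      then show "x \<in> {x. x \<in> ?H \<times> ?V \<and> ?g x = s} \<longleftrightarrow> x \<in> {(p,q). p \<in> ?H \<and> q \<in> ?V \<and> p \<circ> q = inv s}"
        unfolding x by auto
    qed
    have "(\<Sum>x\<in>{x. x \<in> ?H \<times> ?V \<and> ?g x = s}. ?h x) = (\<Sum>x\<in>{x. x \<in> ?H \<times> ?V \<and> ?g x = s}. of_int (sign (snd x)) * P (v \<circ> s))"
      by (rule sum.cong) auto
    also have "\<dots> = (\<Sum>x\<in>{x. x \<in> ?H \<times> ?V \<and> ?g x = s}. of_int (sign (snd x))) * P (v \<circ> s)"
      by (simp add: sum_distrib_right)
    also have "\<dots> = young_sym t (inv s) * P (v \<circ> s)"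
      unfolding seteq young_sym_def by (simp add: case_prod_beta)
    also have "\<dots> = star n (young_sym t) s * P (v \<circ> s)"
      unfolding star_def using s by simp
    finally show "(\<Sum>x\<in>{x. x \<in> ?H \<times> ?V \<and> ?g x = s}. ?h x) = star n (young_sym t) s * P (v \<circ> s)" .
  qed simp
  also have "\<dots> = act n (star n (young_sym t)) P v" unfolding act_def ..
  finally show ?thesis by simp
qed

lemma sum_HV_inv:
  fixes P :: "(nat \<Rightarrow> 'v) \<Rightarrow> 'k::comm_ring_1"
  shows "(\<Sum>x\<in>row_group t \<times> col_group t. of_int (sign (snd x)) * P (v \<circ> inv (fst x \<circ> snd x)))
    = (\<Sum>p\<in>row_group t. \<Sum>q\<in>col_group t. of_int (sign q) * P (v \<circ> q \<circ> p))"
proof -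
  let ?H = "row_group t" and ?V = "col_group t"
  let ?n = "length (concat t)"
  have H: "?H \<subseteq> perms ?n" and V: "?V \<subseteq> perms ?n"
    by (rule row_group_perms, rule col_group_perms)
  let ?F = "\<lambda>x. of_int (sign (snd x)) * P (v \<circ> inv (fst x \<circ> snd x)) :: 'k"
  let ?j = "\<lambda>x. (inv (fst x), inv (snd x))"
  have "(\<Sum>x\<in>?H \<times> ?V. ?F x) = (\<Sum>x\<in>?H \<times> ?V. ?F (?j x))"
    by (rule sum.reindex_bij_witness[where i="?j" and j="?j"])
      (auto simp: row_group_inv col_group_inv row_inv_inv col_inv_inv)
  also have "\<dots> = (\<Sum>x\<in>?H \<times> ?V. of_int (sign (snd x)) * P (v \<circ> snd x \<circ> fst x))"
  proof (rule sum.cong)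
    fix x assume x: "x \<in> ?H \<times> ?V"
    then have p: "fst x \<in> perms ?n" and q: "snd x \<in> perms ?n" using H V by auto
    have "inv (inv (fst x) \<circ> inv (snd x)) = inv (inv (snd x)) \<circ> inv (inv (fst x))"
    proof (rule o_inv_distrib)
      show "bij (inv (fst x))" using perms_inv[OF p] unfolding perms_def by (simp add: permutes_bij)
      show "bij (inv (snd x))" using perms_inv[OF q] unfolding perms_def by (simp add: permutes_bij)
    qed
    also have "\<dots> = snd x \<circ> fst x" using perms_inv_inv[OF p] perms_inv_inv[OF q] by simp
    finally have e1: "inv (inv (fst x) \<circ> inv (snd x)) = snd x \<circ> fst x" .
    have e2: "sign (inv (snd x)) = sign (snd x)" using q by (simp add: sign_inverse perms_permutation)
    show "?F (?j x) = of_int (sign (snd x)) * P (v \<circ> snd x \<circ> fst x)"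
      by (simp add: e1 e2 comp_assoc)
  qed simp
  also have "\<dots> = (\<Sum>p\<in>?H. \<Sum>q\<in>?V. of_int (sign q) * P (v \<circ> q \<circ> p))"
    by (simp add: sum.cartesian_product case_prod_beta)
  finally show ?thesis .
qed




lemma comp_disj_apply:
  assumes s: "\<sigma> permutes A" and t: "\<tau> permutes B" and d: "A \<inter> B = {}"
  shows "x \<in> A \<Longrightarrow> (\<sigma> \<circ> \<tau>) x = \<sigma> x"
    and "x \<in> B \<Longrightarrow> (\<sigma> \<circ> \<tau>) x = \<tau> x"
    and "x \<notin> A \<Longrightarrow> x \<notin> B \<Longrightarrow> (\<sigma> \<circ> \<tau>) x = x"
proof -
  show "x \<in> A \<Longrightarrow> (\<sigma> \<circ> \<tau>) x = \<sigma> x"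
  proof -
    assume "x \<in> A" then have "x \<notin> B" using d by blast
    then show ?thesis using permutes_not_in[OF t] by simp
  qed
  show "x \<in> B \<Longrightarrow> (\<sigma> \<circ> \<tau>) x = \<tau> x"
  proof -
    assume "x \<in> B" then have "\<tau> x \<in> B" using permutes_in_image[OF t] by simp
    then have "\<tau> x \<notin> A" using d by blast
    then show ?thesis using permutes_not_in[OF s] by simp
  qed
  show "x \<notin> A \<Longrightarrow> x \<notin> B \<Longrightarrow> (\<sigma> \<circ> \<tau>) x = x"
    using permutes_not_in[OF s] permutes_not_in[OF t] by simp
qed

lemma prod_perm_sum:
  assumes fA: "finite A" and fB: "finite B" and d: "A \<inter> B = {}"
  shows "(\<Sum>p\<in>{p. p permutes (A \<union> B) \<and> p ` A = A \<and> p ` B = B}. g p)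
       = (\<Sum>\<sigma>\<in>{\<sigma>. \<sigma> permutes A}. \<Sum>\<tau>\<in>{\<tau>. \<tau> permutes B}. g (\<sigma> \<circ> \<tau>))"
proof -
  let ?PA = "{\<sigma>. \<sigma> permutes A}" and ?PB = "{\<tau>. \<tau> permutes B}"
  let ?m = "\<lambda>x. fst x \<circ> snd x"
  have inj: "inj_on ?m (?PA \<times> ?PB)"
  proof (rule inj_onI)
    fix x y assume x: "x \<in> ?PA \<times> ?PB" and y: "y \<in> ?PA \<times> ?PB" and e: "?m x = ?m y"
    have sx: "fst x permutes A" and tx: "snd x permutes B" using x by auto
    have sy: "fst y permutes A" and ty: "snd y permutes B" using y by auto
    have "fst x = fst y"
    proof
      fix z show "fst x z = fst y z"
      proof (cases "z \<in> A")
        case True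
        then show ?thesis using comp_disj_apply(1)[OF sx tx d True] comp_disj_apply(1)[OF sy ty d True] e by metis
      next
        case False
        then show ?thesis using permutes_not_in[OF sx] permutes_not_in[OF sy] by simp
      qed
    qed
    moreover have "snd x = snd y"
    proof
      fix z show "snd x z = snd y z"
      proof (cases "z \<in> B")
        case True
        then show ?thesis using comp_disj_apply(2)[OF sx tx d True] comp_disj_apply(2)[OF sy ty d True] e by metis
      next
        case False
        then show ?thesis using permutes_not_in[OF tx] permutes_not_in[OF ty] by simp
      qed
    qed
    ultimately show "x = y" by (simp add: prod_eq_iff)
  qed
  have img: "?m ` (?PA \<times> ?PB) = {p. p permutes (A \<union> B) \<and> p ` A = A \<and> p ` B = B}"
  proof (rule set_eqI, rule iffI)
    fix p assume "p \<in> ?m ` (?PA \<times> ?PB)"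
    then obtain \<sigma> \<tau> where s: "\<sigma> permutes A" and t: "\<tau> permutes B" and p: "p = \<sigma> \<circ> \<tau>" by auto
    have s': "\<sigma> permutes (A \<union> B)" using permutes_subset[OF s] by blast
    have t': "\<tau> permutes (A \<union> B)" using permutes_subset[OF t] by blast
    have "p permutes (A \<union> B)" unfolding p by (rule permutes_compose[OF t' s'])
    moreover have "p ` A = A"
    proof -
      have "p ` A = \<sigma> ` A" unfolding p using comp_disj_apply(1)[OF s t d] by (auto simp: image_def)
      then show ?thesis using permutes_image[OF s] by simp
    qed
    moreover have "p ` B = B"
    proof -
      have "p ` B = \<tau> ` B" unfolding p using comp_disj_apply(2)[OF s t d] by (auto simp: image_def)
      then show ?thesis using permutes_image[OF t] by simp
    qed
    ultimately show "p \<in> {p. p permutes (A \<union> B) \<and> p ` A = A \<and> p ` B = B}" by simp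
  next
    fix p assume "p \<in> {p. p permutes (A \<union> B) \<and> p ` A = A \<and> p ` B = B}"
    then have pp: "p permutes (A \<union> B)" and pA: "p ` A = A" and pB: "p ` B = B" by auto
    have ip: "inj p" using permutes_inj[OF pp] .
    have bA: "bij_betw p A A" using pA ip by (simp add: bij_betw_def inj_on_subset[OF ip subset_UNIV])
    have bB: "bij_betw p B B" using pB ip by (simp add: bij_betw_def inj_on_subset[OF ip subset_UNIV])
    let ?s = "restrict_id p A" and ?t = "restrict_id p B"
    have s: "?s permutes A" by (rule permutes_restrict_id[OF bA])
    have t: "?t permutes B" by (rule permutes_restrict_id[OF bB])
    have "p = ?s \<circ> ?t"
    proof
      fix z show "p z = (?s \<circ> ?t) z"
      proof (cases "z \<in> A")
        case True then show ?thesis using comp_disj_apply(1)[OF s t d True] by simp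
      next
        case nA: False
        show ?thesis
        proof (cases "z \<in> B")
          case True then show ?thesis using comp_disj_apply(2)[OF s t d True] by simp
        next
          case False
          then show ?thesis using comp_disj_apply(3)[OF s t d nA False] permutes_not_in[OF pp] nA by simp
        qed
      qed
    qed
    then show "p \<in> ?m ` (?PA \<times> ?PB)" using s t by (auto simp: image_def)
  qed
  have "(\<Sum>\<sigma>\<in>?PA. \<Sum>\<tau>\<in>?PB. g (\<sigma> \<circ> \<tau>)) = (\<Sum>x\<in>?PA \<times> ?PB. g (?m x))"
    by (simp add: sum.cartesian_product case_prod_beta)
  also have "\<dots> = sum g (?m ` (?PA \<times> ?PB))" using sum.reindex[OF inj, of g] by (simp add: comp_def)
  finally show ?thesis unfolding img by simp
qed




lemma five_set: "{1..5::nat} = {1,3,5} \<union> {2,4}" by auto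
lemma four_set: "{1,2} \<union> {3,4} = {1..5::nat} - {5}" by auto

lemma all_less_2: "(\<forall>i<(2::nat). P i) \<longleftrightarrow> P 0 \<and> P 1"
  by (auto simp: less_2_cases_iff)

lemma ex_less_2: "(\<exists>i. i < (2::nat) \<and> P i) \<longleftrightarrow> P 0 \<or> P 1"
  by (auto simp: less_2_cases_iff)

lemma len_t': "length t' = 2" by (simp add: t'_def)

lemma row_t': "row_group t' = {p. p permutes ({1,3,5} \<union> {2,4}) \<and> p ` {1,3,5} = {1,3,5} \<and> p ` {2,4} = {2,4}}"
proof -
  have l: "length (concat t') = 5" by (simp add: t'_def)
  have q: "(\<forall>i<length t'. p ` set (t' ! i) = set (t' ! i)) \<longleftrightarrow> p ` {1,3,5} = {1,3,5} \<and> p ` {2,4} = {2,4}" for p :: "nat \<Rightarrow> nat"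
    unfolding len_t' all_less_2 by (simp add: t'_def)
  show ?thesis unfolding row_group_def l q perms_def five_set by simp
qed

lemma tc': "tab_col t' j = (if j = 0 then {1,2} else if j = 1 then {3,4} else if j = 2 then {5} else {})"
proof -
  have "tab_col t' j = {x. \<exists>i. i < 2 \<and> (x = t' ! i ! j \<and> j < length (t' ! i))}"
    unfolding tab_col_def len_t' by blast
  also have "\<dots> = {x. (x = [1,3,5] ! j \<and> j < length [1,3,5::nat]) \<or> (x = [2,4] ! j \<and> j < length [2,4::nat])}"
    unfolding ex_less_2 by (simp add: t'_def)
  also have "\<dots> = (if j = 0 then {1,2} else if j = 1 then {3,4} else if j = 2 then {5} else {})"
  proof -
    consider "j = 0" | "j = 1" | "j = 2" | "j \<ge> 3" by linarith
    then show ?thesis by cases auto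
  qed
  finally show ?thesis .
qed

lemma col_t': "col_group t' = {q. q permutes ({1,2} \<union> {3,4}) \<and> q ` {1,2} = {1,2} \<and> q ` {3,4} = {3,4}}"
proof -
  have l: "length (concat t') = 5" by (simp add: t'_def)
  have q: "(\<forall>j. q ` tab_col t' j = tab_col t' j) \<longleftrightarrow> q ` {1,2} = {1,2} \<and> q ` {3,4} = {3,4} \<and> q 5 = 5" for q :: "nat \<Rightarrow> nat"
  proof
    assume h: "\<forall>j. q ` tab_col t' j = tab_col t' j"
    have "q ` {1,2} = {1,2}" using h[rule_format, of 0] by (simp add: tc')
    moreover have "q ` {3,4} = {3,4}" using h[rule_format, of 1] by (simp add: tc')
    moreover have "q ` {5} = {5}" using h[rule_format, of 2] by (simp add: tc')
    ultimately show "q ` {1,2} = {1,2} \<and> q ` {3,4} = {3,4} \<and> q 5 = 5" by simp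
  next
    assume "q ` {1,2} = {1,2} \<and> q ` {3,4} = {3,4} \<and> q 5 = 5"
    then show "\<forall>j. q ` tab_col t' j = tab_col t' j" by (simp add: tc')
  qed
  have r: "q permutes {1..5} \<and> q 5 = 5 \<longleftrightarrow> q permutes ({1,2} \<union> {3,4})" for q :: "nat \<Rightarrow> nat"
  proof
    assume a: "q permutes {1..5} \<and> q 5 = 5"
    have x5: "x \<in> {1..5::nat} - ({1,2} \<union> {3,4}) \<Longrightarrow> x = 5" for x unfolding five_set by auto
    show "q permutes ({1,2} \<union> {3,4})"
      by (rule permutes_superset[of q "{1..5}"]) (use a x5 in blast)+
  next
    assume a: "q permutes ({1,2} \<union> {3,4})"
    have "q permutes {1..5}" by (rule permutes_subset[OF a]) auto
    moreover have "q 5 = 5" using permutes_not_in[OF a] by simp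
    ultimately show "q permutes {1..5} \<and> q 5 = 5" ..
  qed
  show ?thesis unfolding col_group_def l q perms_def using r by blast
qed




lemma act_t'_sum:
  fixes P :: "(nat \<Rightarrow> 'v) \<Rightarrow> 'k::comm_ring_1"
  shows "act 5 (star 5 (young_sym t')) P v =
    (\<Sum>\<sigma>\<in>{\<sigma>. \<sigma> permutes {1,3,5::nat}}. \<Sum>\<tau>\<in>{\<tau>. \<tau> permutes {2,4::nat}}.
     \<Sum>\<alpha>\<in>{\<alpha>. \<alpha> permutes {1,2::nat}}. \<Sum>\<beta>\<in>{\<beta>. \<beta> permutes {3,4::nat}}.
     of_int (sign (\<alpha> \<circ> \<beta>)) * P (v \<circ> (\<alpha> \<circ> \<beta>) \<circ> (\<sigma> \<circ> \<tau>)))"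
proof -
  have l: "length (concat t') = 5" by (simp add: t'_def)
  have "act 5 (star 5 (young_sym t')) P v =
     (\<Sum>p\<in>row_group t'. \<Sum>q\<in>col_group t'. of_int (sign q) * P (v \<circ> q \<circ> p))"
    using act_star_young[of t' P v] sum_HV_inv[of P v t'] unfolding l by simp
  also have "\<dots> = (\<Sum>\<sigma>\<in>{\<sigma>. \<sigma> permutes {1,3,5::nat}}. \<Sum>\<tau>\<in>{\<tau>. \<tau> permutes {2,4::nat}}.
      \<Sum>q\<in>col_group t'. of_int (sign q) * P (v \<circ> q \<circ> (\<sigma> \<circ> \<tau>)))"
    unfolding row_t' by (rule prod_perm_sum) auto
  also have "\<dots> = (\<Sum>\<sigma>\<in>{\<sigma>. \<sigma> permutes {1,3,5::nat}}. \<Sum>\<tau>\<in>{\<tau>. \<tau> permutes {2,4::nat}}.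
     \<Sum>\<alpha>\<in>{\<alpha>. \<alpha> permutes {1,2::nat}}. \<Sum>\<beta>\<in>{\<beta>. \<beta> permutes {3,4::nat}}.
     of_int (sign (\<alpha> \<circ> \<beta>)) * P (v \<circ> (\<alpha> \<circ> \<beta>) \<circ> (\<sigma> \<circ> \<tau>)))"
    unfolding col_t' by (subst prod_perm_sum) auto
  finally show ?thesis .
qed

lemma comp_both:
  fixes T Th :: "(nat \<Rightarrow> 'v) \<Rightarrow> 'k::comm_ring_1"
  assumes l2: "\<And>w w'. w 1 = w' 1 \<Longrightarrow> w 2 = w' 2 \<Longrightarrow> T w = T w'"
    and s2: "\<And>w. T (w \<circ> transpose 1 2) = ea * T w"
    and l3: "\<And>w w'. w 1 = w' 1 \<Longrightarrow> w 2 = w' 2 \<Longrightarrow> w 3 = w' 3 \<Longrightarrow> Th w = Th w'"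
    and s3a: "\<And>w. Th (w \<circ> transpose 1 2) = eb * Th w"
    and s3b: "\<And>w. Th (w \<circ> transpose 2 3) = eb * Th w"
    and e: "(ea = 1 \<and> eb = -1) \<or> (ea = -1 \<and> eb = 1) \<or> (ea = -1 \<and> eb = -1)"
  shows "act 5 (star 5 (young_sym t')) (tprod23 T Th) v = 0"
    and "act 5 (star 5 (young_sym t')) (tprod32 Th T) v = 0"
proof -
  define t2 where "t2 a b = T (\<lambda>i. if i = 1 then a else b)" for a b
  define t3 where "t3 a b c = Th (\<lambda>i. if i = 1 then a else if i = 2 then b else c)" for a b c
  have hT: "T w = t2 (w 1) (w 2)" for w unfolding t2_def by (rule l2) auto
  have hTh: "Th w = t3 (w 1) (w 2) (w 3)" for w unfolding t3_def by (rule l3) auto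
  have sw2: "t2 a b = ea * t2 b a" for a b
  proof -
    have "t2 a b = T ((\<lambda>i. if i = 1 then b else a) \<circ> transpose 1 2)"
      unfolding t2_def by (rule l2) auto
    then show ?thesis using s2 unfolding t2_def by simp
  qed
  have sw3a: "t3 a b c = eb * t3 b a c" for a b c
  proof -
    have "t3 a b c = Th ((\<lambda>i. if i = 1 then b else if i = 2 then a else c) \<circ> transpose 1 2)"
      unfolding t3_def by (rule l3) auto
    then show ?thesis using s3a unfolding t3_def by simp
  qed
  have sw3b: "t3 a b c = eb * t3 a c b" for a b c
  proof -
    have "t3 a b c = Th ((\<lambda>i. if i = 1 then a else if i = 2 then c else b) \<circ> transpose 2 3)"
      unfolding t3_def by (rule l3) auto
    then show ?thesis using s3b unfolding t3_def by simp
  qed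
  have p23: "tprod23 T Th w = t2 (w 1) (w 2) * t3 (w 3) (w 4) (w 5)" for w :: "nat \<Rightarrow> 'v"
  proof -
    have "Th (\<lambda>j. w (j + 2)) = t3 (w 3) (w 4) (w 5)" using hTh[of "\<lambda>j. w (j + 2)"] by (simp add: numeral_Bit1 numeral_Bit0)
    then show ?thesis unfolding tprod23_def hT[of w] by simp
  qed
  have p32: "tprod32 Th T w = t3 (w 1) (w 2) (w 3) * t2 (w 4) (w 5)" for w :: "nat \<Rightarrow> 'v"
  proof -
    have "T (\<lambda>j. w (j + 3)) = t2 (w 4) (w 5)" using hT[of "\<lambda>j. w (j + 3)"] by (simp add: numeral_Bit1 numeral_Bit0)
    then show ?thesis unfolding tprod32_def hTh[of w] by simp
  qed
  have r2: "j < i \<Longrightarrow> t2 (v i) (v j) = ea * t2 (v j) (v i)" for i j :: nat using sw2 .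
  have r3a: "j < i \<Longrightarrow> t3 (v i) (v j) (v k) = eb * t3 (v j) (v i) (v k)" for i j k :: nat using sw3a .
  have r3b: "k < j \<Longrightarrow> t3 (v i) (v j) (v k) = eb * t3 (v i) (v k) (v j)" for i j k :: nat using sw3b .
  show "act 5 (star 5 (young_sym t')) (tprod23 T Th) v = 0"
    unfolding act_t'_sum p23
    apply (simp add: sum_over_permutations_insert sign_compose sign_swap_id permutation_swap_id permutation_compose)
    using e apply (elim disjE conjE)
      apply (simp_all add: r2 r3a r3b)
    done
  show "act 5 (star 5 (young_sym t')) (tprod32 Th T) v = 0"
    unfolding act_t'_sum p32
    apply (simp add: sum_over_permutations_insert sign_compose sign_swap_id permutation_swap_id permutation_compose)
    using e apply (elim disjE conjE)
      apply (simp_all add: r2 r3a r3b)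
    done
qed




lemma part2: "partition_of 2 lam \<Longrightarrow> lam = [2] \<or> lam = [1,1]"
  unfolding partition_of_def
  apply (cases lam; simp)
  subgoal for a l by (cases l; cases "tl l"; auto)
  done

lemma part3: "partition_of 3 lam \<Longrightarrow> lam = [3] \<or> lam = [2,1] \<or> lam = [1,1,1]"
  unfolding partition_of_def
  apply (cases lam; simp)
  subgoal for a l by (cases l; cases "tl l"; cases "tl (tl l)"; auto)
  done

definition chi :: "bool \<Rightarrow> (nat \<Rightarrow> nat) \<Rightarrow> 'k::comm_ring_1" where
  "chi b = (if b then (\<lambda>p. of_int (sign p)) else (\<lambda>_. 1))"

lemma chi_good: "good_char n (chi b)"
  unfolding chi_def using good_char_one good_char_sign by (cases b) auto

lemma chi_transp: "i \<noteq> j \<Longrightarrow> chi b (transpose i j) = (if b then -1 else 1)"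
  unfolding chi_def by (simp add: sign_swap_id)

lemma tensor_props:
  fixes R :: "('k::comm_ring_1) grpring set" and T :: "(nat \<Rightarrow> 'n::finite \<Rightarrow> 'k) \<Rightarrow> 'k"
  assumes mr: "minimal_right_ideal n R" and oc: "of_class n lam R"
    and lam: "lam = (if b then replicate n 1 else [n])" and T: "T \<in> symclass n R"
  shows "\<And>\<tau> v. \<tau> \<in> perms n \<Longrightarrow> T (v \<circ> \<tau>) = chi b \<tau> * T v"
    and "\<And>v w. (\<forall>i\<in>{1..n}. v i = w i) \<Longrightarrow> T v = T w"
proof -
  have ri: "right_ideal n R" using mr unfolding minimal_right_ideal_def by blast
  obtain t where t: "tableau_of_shape n lam t"
    and iso: "right_module_iso n R {gr_mult n (young_sym t) b | b. b \<in> group_ring n}"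
    using oc unfolding of_class_def by blast
  have y: "young_sym t = (ychar n (chi b) :: 'k grpring)"
  proof (cases b)
    case True
    then show ?thesis using young_col[of n t] t lam unfolding chi_def by simp
  next
    case False
    then show ?thesis using young_row[of n t] t lam unfolding chi_def by simp
  qed
  obtain x T0 where T: "T = act n x T0" and x: "x \<in> R" and T0: "T0 \<in> tensors n"
    using T unfolding symclass_def by blast
  have xf: "\<forall>u\<in>perms n. x u = chi b u * x id"
    by (rule R_form[OF ri chi_good _ x]) (use iso y in simp)
  show "\<And>\<tau> v. \<tau> \<in> perms n \<Longrightarrow> T (v \<circ> \<tau>) = chi b \<tau> * T v"
    unfolding T by (rule act_sym[OF chi_good xf])
  show "\<And>v w. (\<forall>i\<in>{1..n}. v i = w i) \<Longrightarrow> T v = T w"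
    unfolding T by (rule act_loc[OF T0])
qed

lemma main_generic:
  fixes R Rh :: "('k::comm_ring_1) grpring set" and T Th :: "(nat \<Rightarrow> 'n::finite \<Rightarrow> 'k) \<Rightarrow> 'k"
  assumes p2: "partition_of 2 lam" and p3: "partition_of 3 lamh"
    and ex: "(lam, lamh) \<notin> {([2],[3]), ([2],[2,1]), ([1,1],[2,1])}"
    and mr: "minimal_right_ideal 2 R" and oc: "of_class 2 lam R"
    and mrh: "minimal_right_ideal 3 Rh" and och: "of_class 3 lamh Rh"
    and T: "T \<in> symclass 2 R" and Th: "Th \<in> symclass 3 Rh"
  shows "act 5 (star 5 (young_sym t')) (tprod23 T Th) = 0 \<and>
         act 5 (star 5 (young_sym t')) (tprod32 Th T) = 0"
proof -
  obtain b1 where b1: "lam = (if b1 then replicate 2 1 else [2])"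
    using part2[OF p2] by (metis numeral_2_eq_2 replicate_0 replicate_Suc)
  have "lamh \<noteq> [2,1]" using ex part2[OF p2] by auto
  then obtain b2 where b2: "lamh = (if b2 then replicate 3 1 else [3])"
    using part3[OF p3] by (metis numeral_3_eq_3 replicate_0 replicate_Suc)
  have nb: "b1 \<or> b2"
  proof (rule ccontr)
    assume "\<not> (b1 \<or> b2)"
    then have "lam = [2]" "lamh = [3]" using b1 b2 by auto
    then show False using ex by simp
  qed
  note TP = tensor_props[OF mr oc b1 T]
  note ThP = tensor_props[OF mrh och b2 Th]
  let ?e1 = "(if b1 then -1 else 1) :: 'k" and ?e2 = "(if b2 then -1 else 1) :: 'k"
  have l2: "\<And>w w'. w 1 = w' 1 \<Longrightarrow> w 2 = w' 2 \<Longrightarrow> T w = T w'"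
  proof -
    fix w w' :: "nat \<Rightarrow> 'n \<Rightarrow> 'k" assume "w 1 = w' 1" "w 2 = w' 2"
    then have "\<forall>i\<in>{1..2}. w i = w' i" by (auto simp: le_Suc_eq numeral_2_eq_2)
    then show "T w = T w'" by (rule TP(2))
  qed
  have l3: "\<And>w w'. w 1 = w' 1 \<Longrightarrow> w 2 = w' 2 \<Longrightarrow> w 3 = w' 3 \<Longrightarrow> Th w = Th w'"
  proof -
    fix w w' :: "nat \<Rightarrow> 'n \<Rightarrow> 'k" assume "w 1 = w' 1" "w 2 = w' 2" "w 3 = w' 3"
    then have "\<forall>i\<in>{1..3}. w i = w' i" by (auto simp: le_Suc_eq numeral_2_eq_2 numeral_3_eq_3)
    then show "Th w = Th w'" by (rule ThP(2))
  qed
  have tp: "transpose 1 2 \<in> perms 2" "transpose 1 2 \<in> perms 3" "transpose 2 3 \<in> perms 3"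
    unfolding perms_def by (auto intro: permutes_swap_id)
  have c1: "chi b1 (transpose 1 2) = ?e1" by (rule chi_transp) simp
  have c2: "chi b2 (transpose 1 2) = ?e2" by (rule chi_transp) simp
  have c3: "chi b2 (transpose 2 3) = ?e2" by (rule chi_transp) simp
  have s2: "\<And>w. T (w \<circ> transpose 1 2) = ?e1 * T w"
    by (rule TP(1)[OF tp(1), unfolded c1])
  have s3a: "\<And>w. Th (w \<circ> transpose 1 2) = ?e2 * Th w"
    by (rule ThP(1)[OF tp(2), unfolded c2])
  have s3b: "\<And>w. Th (w \<circ> transpose 2 3) = ?e2 * Th w"
    by (rule ThP(1)[OF tp(3), unfolded c3])
  have e: "(?e1 = 1 \<and> ?e2 = -1) \<or> (?e1 = -1 \<and> ?e2 = 1) \<or> (?e1 = -1 \<and> ?e2 = -1)"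
    using nb by auto
  have A: "act 5 (star 5 (young_sym t')) (tprod23 T Th) v = 0" for v
    apply (rule comp_both(1)[where ea="?e1" and eb="?e2"])
    apply (rule l2; assumption)
    apply (rule s2)
    apply (rule l3; assumption)
    apply (rule s3a)
    apply (rule s3b)
    apply (rule e)
    done
  have B: "act 5 (star 5 (young_sym t')) (tprod32 Th T) v = 0" for v
    apply (rule comp_both(2)[where ea="?e1" and eb="?e2"])
    apply (rule l2; assumption)
    apply (rule s2)
    apply (rule l3; assumption)
    apply (rule s3a)
    apply (rule s3b)
    apply (rule e)
    done
  show ?thesis using A B by (simp add: fun_eq_iff)
qed



theorem theorem1p8:
  shows "(\<forall>lam lamh (R :: real grpring set) (Rh :: real grpring set).
            partition_of 2 lam \<and> partition_of 3 lamh \<and>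
            (lam, lamh) \<notin> {([2],[3]), ([2],[2,1]), ([1,1],[2,1])} \<and>
            minimal_right_ideal 2 R \<and> of_class 2 lam R \<and>
            minimal_right_ideal 3 Rh \<and> of_class 3 lamh Rh \<longrightarrow>
            (\<forall>T \<in> (symclass 2 R :: ((nat \<Rightarrow> 'n::finite \<Rightarrow> real) \<Rightarrow> real) set).
             \<forall>Th \<in> (symclass 3 Rh :: ((nat \<Rightarrow> 'n \<Rightarrow> real) \<Rightarrow> real) set).
               act 5 (star 5 (young_sym t')) (tprod23 T Th) = 0 \<and>
               act 5 (star 5 (young_sym t')) (tprod32 Th T) = 0))
       \<and>
         (\<forall>lam lamh (R :: complex grpring set) (Rh :: complex grpring set).
            partition_of 2 lam \<and> partition_of 3 lamh \<and>
            (lam, lamh) \<notin> {([2],[3]), ([2],[2,1]), ([1,1],[2,1])} \<and>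
            minimal_right_ideal 2 R \<and> of_class 2 lam R \<and>
            minimal_right_ideal 3 Rh \<and> of_class 3 lamh Rh \<longrightarrow>
            (\<forall>T \<in> (symclass 2 R :: ((nat \<Rightarrow> 'n \<Rightarrow> complex) \<Rightarrow> complex) set).
             \<forall>Th \<in> (symclass 3 Rh :: ((nat \<Rightarrow> 'n \<Rightarrow> complex) \<Rightarrow> complex) set).
               act 5 (star 5 (young_sym t')) (tprod23 T Th) = 0 \<and>
               act 5 (star 5 (young_sym t')) (tprod32 Th T) = 0))"
  proof (rule conjI)
  show "\<forall>lam lamh (R :: real grpring set) (Rh :: real grpring set).
            partition_of 2 lam \<and> partition_of 3 lamh \<and>
            (lam, lamh) \<notin> {([2],[3]), ([2],[2,1]), ([1,1],[2,1])} \<and>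
            minimal_right_ideal 2 R \<and> of_class 2 lam R \<and>
            minimal_right_ideal 3 Rh \<and> of_class 3 lamh Rh \<longrightarrow>
            (\<forall>T \<in> (symclass 2 R :: ((nat \<Rightarrow> 'n::finite \<Rightarrow> real) \<Rightarrow> real) set).
             \<forall>Th \<in> (symclass 3 Rh :: ((nat \<Rightarrow> 'n \<Rightarrow> real) \<Rightarrow> real) set).
               act 5 (star 5 (young_sym t')) (tprod23 T Th) = 0 \<and>
               act 5 (star 5 (young_sym t')) (tprod32 Th T) = 0)"
    using main_generic by blast
  show "\<forall>lam lamh (R :: complex grpring set) (Rh :: complex grpring set).
            partition_of 2 lam \<and> partition_of 3 lamh \<and>
            (lam, lamh) \<notin> {([2],[3]), ([2],[2,1]), ([1,1],[2,1])} \<and>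
            minimal_right_ideal 2 R \<and> of_class 2 lam R \<and>
            minimal_right_ideal 3 Rh \<and> of_class 3 lamh Rh \<longrightarrow>
            (\<forall>T \<in> (symclass 2 R :: ((nat \<Rightarrow> 'n \<Rightarrow> complex) \<Rightarrow> complex) set).
             \<forall>Th \<in> (symclass 3 Rh :: ((nat \<Rightarrow> 'n \<Rightarrow> complex) \<Rightarrow> complex) set).
               act 5 (star 5 (young_sym t')) (tprod23 T Th) = 0 \<and>
               act 5 (star 5 (young_sym t')) (tprod32 Th T) = 0)"
    using main_generic by blast
qed

end
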